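(* Let $(g_1,f_1,\lambda_1)$ and $(g_2,f_2,\lambda_2)$ be spectral triples for $(T,p,q)$, $1<p,q<\infty$. Then for every $\varepsilon>0$, \[ P(Tf_1-\varepsilon Tf_2)\le P\Big(Tf_1-\varepsilon^{(p-1)/(q-1)}(\lambda_2/\lambda_1)^{1/(q-1)}\,Tf_2\Big). \]
   Context: $-\infty<a<b<\infty$, $I=[a,b]$, $1<p,q<\infty$, $1/p'=1-1/p$. The functions $u,v$ are positive on $I$ with $u\in L_{p'}(I)$, $v\in L_q(I)$. $T:L_p(I)\to L_q(I)$ is $(Tf)(x)=v(x)\int_a^x f(t)u(t)\,dt$ and $T^*$ is $(T^*h)(x)=u(x)\int_x^b v(y)h(y)\,dy$. For $s>1$ and real $t$, $t_{(s)}:=|t|^{s-1}\operatorname{sgn}(t)$, and $h_{(s)}$ denotes the function $x\mapsto (h(x))_{(s)}$. A spectral triple is $(g,f,\lambda)$ with $f\in L_p(I)$, $\|f\|_p=1$, $\lambda$ a real number, satisfying $g=Tf$ and $f_{(p)}=\lambda\, T^*(g_{(q)})$ on $I$. For a continuous function $h$ on $I$, $P(h)$ is the number of sign changes of $h$ on $(a,b)$. *)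

theory Defs
  imports "HOL-Analysis.Analysis"
begin

definition in_Lp :: "real \<Rightarrow> real \<Rightarrow> real \<Rightarrow> (real \<Rightarrow> real) \<Rightarrow> bool" where
  "in_Lp s a b f \<longleftrightarrow> set_borel_measurable lborel {a..b} f \<and>
     set_integrable lborel {a..b} (\<lambda>x. \<bar>f x\<bar> powr s)"

definition Lp_norm :: "real \<Rightarrow> real \<Rightarrow> real \<Rightarrow> (real \<Rightarrow> real) \<Rightarrow> real" where
  "Lp_norm s a b f = (LINT x:{a..b}|lborel. \<bar>f x\<bar> powr s) powr (1 / s)"

definition Hop :: "real \<Rightarrow> (real \<Rightarrow> real) \<Rightarrow> (real \<Rightarrow> real) \<Rightarrow> (real \<Rightarrow> real) \<Rightarrow> real \<Rightarrow> real" where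
  "Hop a u v f x = v x * (LINT t:{a..x}|lborel. f t * u t)"

definition Hadj :: "real \<Rightarrow> (real \<Rightarrow> real) \<Rightarrow> (real \<Rightarrow> real) \<Rightarrow> (real \<Rightarrow> real) \<Rightarrow> real \<Rightarrow> real" where
  "Hadj b u v h x = u x * (LINT y:{x..b}|lborel. v y * h y)"

definition spow :: "real \<Rightarrow> real \<Rightarrow> real" where
  "spow s t = \<bar>t\<bar> powr (s - 1) * sgn t"

definition spectral_triple ::
  "real \<Rightarrow> real \<Rightarrow> (real \<Rightarrow> real) \<Rightarrow> (real \<Rightarrow> real) \<Rightarrow> real \<Rightarrow> real \<Rightarrow>
   (real \<Rightarrow> real) \<Rightarrow> (real \<Rightarrow> real) \<Rightarrow> real \<Rightarrow> bool" where
  "spectral_triple a b u v p q g f lam \<longleftrightarrow>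
     in_Lp p a b f \<and> Lp_norm p a b f = 1 \<and>
     (\<forall>x\<in>{a..b}. g x = Hop a u v f x) \<and>
     (AE x in lborel. x \<in> {a..b} \<longrightarrow>
        spow p (f x) = lam * Hadj b u v (\<lambda>y. spow q (g y)) x)"

definition sign_changes :: "real \<Rightarrow> real \<Rightarrow> (real \<Rightarrow> real) \<Rightarrow> enat" where
  "sign_changes a b h = Sup {enat n | n. \<exists>xs :: nat \<Rightarrow> real.
      (\<forall>i\<le>n. a < xs i \<and> xs i < b) \<and>
      (\<forall>i<n. xs i < xs (Suc i) \<and> h (xs i) * h (xs (Suc i)) < 0)}"

end

theory Submission
  imports Defs
begin


lemma spow_strict_mono:
  assumes s: "1 < s" and xy: "x < y"
  shows "spow s x < spow s y"
proof -
  consider "0 \<le> x" | "x < 0 \<and> y \<le> 0" | "x < 0 \<and> 0 < y" using xy by linarith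
  then show ?thesis
  proof cases
    case 1
    then have "\<bar>x\<bar> powr (s-1) < \<bar>y\<bar> powr (s-1)" using xy s by (intro powr_less_mono2) auto
    then show ?thesis using 1 xy by (auto simp: spow_def sgn_if)
  next
    case 2
    then have "\<bar>y\<bar> powr (s-1) < \<bar>x\<bar> powr (s-1)" using xy s by (intro powr_less_mono2) auto
    then show ?thesis using 2 xy by (auto simp: spow_def sgn_if)
  next
    case 3
    have "0 < y powr (s-1)" using 3 by simp
    moreover have "0 \<le> (- x) powr (s-1)" by simp
    ultimately have "- ((- x) powr (s - 1)) < y powr (s - 1)" by linarith
    then show ?thesis using 3 by (auto simp: spow_def sgn_if)
  qed
qed

lemma spow_sgn_diff:
  assumes s: "1 < s"
  shows "sgn (spow s x - spow s y) = sgn (x - y)"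
  using spow_strict_mono[OF s, of x y] spow_strict_mono[OF s, of y x]
  by (cases "x < y"; cases "y < x") (auto simp: sgn_if)

lemma spow_scale:
  assumes "0 < c"
  shows "spow s (c * x) = c powr (s - 1) * spow s x"
  using assms by (simp add: spow_def abs_mult powr_mult sgn_mult)

lemma spow_mult_self: "x * spow s x = \<bar>x\<bar> powr s" if "1 < s"
proof -
  have "x * spow s x = \<bar>x\<bar> * \<bar>x\<bar> powr (s - 1)"
    by (auto simp: spow_def sgn_if)
  also have "\<dots> = \<bar>x\<bar> powr s"
    by (cases "x = 0") (use that in \<open>auto simp: powr_diff\<close>)
  finally show ?thesis .
qed

lemma abs_spow: "\<bar>spow s x\<bar> = \<bar>x\<bar> powr (s - 1)"
  by (auto simp: spow_def sgn_if)

lemma sgn_spow: "sgn (spow s x) = sgn x"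
  by (auto simp: spow_def sgn_if)

lemma young_simple:
  fixes x y p :: real
  assumes p: "1 < p"
  shows "\<bar>x * y\<bar> \<le> \<bar>x\<bar> powr p + \<bar>y\<bar> powr (p / (p - 1))"
proof (cases "\<bar>y\<bar> \<le> \<bar>x\<bar> powr (p - 1)")
  case True
  have "\<bar>x * y\<bar> \<le> \<bar>x\<bar> * \<bar>x\<bar> powr (p - 1)" 
    unfolding abs_mult by (rule mult_left_mono) (use True in auto)
  also have "\<dots> = \<bar>x\<bar> powr p"
    by (cases "x = 0") (use p in \<open>auto simp: powr_diff\<close>)
  moreover have "0 \<le> \<bar>y\<bar> powr (p / (p - 1))" by simp
  ultimately show ?thesis by linarith
next
  case False
  then have y0: "y \<noteq> 0" by auto
  have "\<bar>x\<bar> = (\<bar>x\<bar> powr (p - 1)) powr (1 / (p - 1))"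
    using p by (simp add: powr_powr)
  also have "\<dots> \<le> \<bar>y\<bar> powr (1 / (p - 1))"
    using False p by (intro powr_mono2) auto
  finally have "\<bar>x * y\<bar> \<le> \<bar>y\<bar> powr (1 / (p - 1)) * \<bar>y\<bar>"
    by (simp add: abs_mult mult_right_mono)
  also have "\<dots> = \<bar>y\<bar> powr (p / (p - 1))"
  proof -
    have "p / (p - 1) = 1 / (p - 1) + 1" using p by (simp add: field_simps)
    then show ?thesis using y0 by (simp add: powr_add)
  qed
  moreover have "0 \<le> \<bar>x\<bar> powr p" by simp
  ultimately show ?thesis by linarith
qed




lemma sgn_m1_iff: "sgn (x::real) = -1 \<longleftrightarrow> x < 0" by (simp add: sgn_if)
lemma sgn_le0_iff: "sgn (x::real) \<le> 0 \<longleftrightarrow> x \<le> 0" by (simp add: sgn_if)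

lemma sign_prod_lemma:
  fixes a b c d :: real
  assumes "a * b < 0" "0 < a * c" "0 < b * d"
  shows "c * d < 0"
proof -
  have "0 < (a * c) * (b * d)" using assms by simp
  also have "(a * c) * (b * d) = (a * b) * (c * d)" by (simp add: algebra_simps)
  finally have "0 < (a * b) * (c * d)" .
  show ?thesis
  proof (rule ccontr)
    assume "\<not> c * d < 0"
    then have "0 \<le> c * d" by simp
    then have "(a * b) * (c * d) \<le> 0" using assms(1) mult_nonpos_nonneg[of "a*b" "c*d"] by linarith
    then show False using \<open>0 < (a * b) * (c * d)\<close> by simp
  qed
qed

definition SCW :: "real \<Rightarrow> real \<Rightarrow> (real \<Rightarrow> real) \<Rightarrow> nat \<Rightarrow> (nat \<Rightarrow> real) \<Rightarrow> bool" where
  "SCW a b h n xs \<longleftrightarrow> (\<forall>i\<le>n. a < xs i \<and> xs i < b) \<and>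
      (\<forall>i<n. xs i < xs (Suc i) \<and> h (xs i) * h (xs (Suc i)) < 0)"

lemma sign_changes_SCW: "sign_changes a b h = Sup {enat n | n. \<exists>xs. SCW a b h n xs}"
  unfolding sign_changes_def SCW_def by simp

lemma sign_changes_le:
  assumes "\<And>n xs. SCW a b h1 n xs \<Longrightarrow> \<exists>ys. SCW a b h2 n ys"
  shows "sign_changes a b h1 \<le> sign_changes a b h2"
  unfolding sign_changes_SCW
  by (rule Sup_subset_mono) (use assms in blast)

lemma SCW_transfer:
  assumes "\<And>x. a < x \<Longrightarrow> x < b \<Longrightarrow> sgn (h1 x) = sgn (h2 x)" "SCW a b h1 n xs"
  shows "SCW a b h2 n xs"
proof -
  have "h2 (xs i) * h2 (xs (Suc i)) < 0" if "i < n" for i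
  proof -
    have r: "a < xs i" "xs i < b" "a < xs (Suc i)" "xs (Suc i) < b"
      using assms(2) that unfolding SCW_def by (auto dest: spec[of _ i] spec[of _ "Suc i"])
    have "h1 (xs i) * h1 (xs (Suc i)) < 0" using assms(2) that unfolding SCW_def by auto
    then have "sgn (h1 (xs i) * h1 (xs (Suc i))) = -1" by (simp only: sgn_m1_iff)
    then have "sgn (h2 (xs i) * h2 (xs (Suc i))) = -1"
      using assms(1)[OF r(1,2)] assms(1)[OF r(3,4)] by (simp only: sgn_mult)
    then show ?thesis by (simp only: sgn_m1_iff)
  qed
  then show ?thesis using assms(2) unfolding SCW_def by auto
qed

lemma point_exists:
  fixes phi H :: "real \<Rightarrow> real" and S :: "real set"
  assumes int: "set_integrable lborel S phi"
    and S: "S \<subseteq> {c..d}"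
    and sg: "AE t in lborel. t \<in> S \<longrightarrow> sgn (phi t) = sgn (H t)"
    and pos: "0 < s * (LINT t:S|lborel. phi t)"
  shows "\<exists>t\<in>{c<..<d}. 0 < s * H t"
proof (rule ccontr)
  assume "\<not> ?thesis"
  then have nh: "\<And>t. c < t \<Longrightarrow> t < d \<Longrightarrow> s * H t \<le> 0" by (auto simp: not_less)
  have ae: "AE t in lborel. 0 \<le> indicator S t * (- (s * phi t))"
    using sg AE_lborel_singleton[of c] AE_lborel_singleton[of d]
  proof eventually_elim
    case (elim t)
    show ?case
    proof (cases "t \<in> S")
      case True
      then have "c < t" "t < d" using S elim by force+
      then have "s * H t \<le> 0" by (rule nh)
      then have "sgn (s * H t) \<le> 0" by (simp only: sgn_le0_iff)
      then have "sgn (s * phi t) \<le> 0" using elim True by (simp only: sgn_mult)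
      then have "s * phi t \<le> 0" by (simp only: sgn_le0_iff)
      then show ?thesis using True by simp
    qed simp
  qed
  have "0 \<le> (LINT t|lborel. indicator S t * (- (s * phi t)))"
    by (rule integral_nonneg_AE[OF ae])
  also have "(LINT t|lborel. indicator S t * (- (s * phi t))) = - (s * (LINT t:S|lborel. phi t))"
  proof -
    have "(LINT t|lborel. indicator S t * (- (s * phi t))) = (LINT t|lborel. - (s * (indicator S t *\<^sub>R phi t)))"
      by (rule Bochner_Integration.integral_cong) (auto simp: indicator_def)
    also have "\<dots> = - (s * (LINT t|lborel. indicator S t *\<^sub>R phi t))"
      by (simp only: Bochner_Integration.integral_minus integral_mult_right_zero)
    finally show ?thesis unfolding set_lebesgue_integral_def .
  qed
  finally show False using pos by simp
qed




lemma int_point0: "(LINT t:{c..c}|lborel. phi t) = (0::real)" for c :: real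
  unfolding set_lebesgue_integral_def
  by (rule integral_eq_zero_AE) (use AE_lborel_singleton[of c] in \<open>eventually_elim, auto simp: indicator_def\<close>)

lemma int_split_left:
  fixes phi :: "real \<Rightarrow> real"
  assumes int: "set_integrable lborel {a..b} phi" and "a \<le> c" "c \<le> x" "x \<le> b"
  shows "(LINT t:{a..x}|lborel. phi t) = (LINT t:{a..c}|lborel. phi t) + (LINT t:{c<..x}|lborel. phi t)"
proof -
  have e: "{a..x} = {a..c} \<union> {c<..x}" using assms by auto
  have i1: "set_integrable lborel {a..c} phi" by (rule set_integrable_subset[OF int]) (use assms in auto)
  have i2: "set_integrable lborel {c<..x} phi" by (rule set_integrable_subset[OF int]) (use assms in auto)
  show ?thesis unfolding e
    by (rule set_integral_Un[OF _ i1 i2]) auto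
qed

lemma int_split_right:
  fixes psi :: "real \<Rightarrow> real"
  assumes int: "set_integrable lborel {a..b} psi" and "a \<le> x" "x \<le> d" "d \<le> b"
  shows "(LINT t:{x..b}|lborel. psi t) = (LINT t:{x..<d}|lborel. psi t) + (LINT t:{d..b}|lborel. psi t)"
proof -
  have e: "{x..b} = {x..<d} \<union> {d..b}" using assms by auto
  have i1: "set_integrable lborel {x..<d} psi" by (rule set_integrable_subset[OF int]) (use assms in auto)
  have i2: "set_integrable lborel {d..b} psi" by (rule set_integrable_subset[OF int]) (use assms in auto)
  show ?thesis unfolding e
    by (rule set_integral_Un[OF _ i1 i2]) auto
qed

lemma fwd_SCW:
  fixes phi H :: "real \<Rightarrow> real"
  assumes int: "set_integrable lborel {a..b} phi"
    and sg: "AE t in lborel. t \<in> {a..b} \<longrightarrow> sgn (phi t) = sgn (H t)"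
    and W: "SCW a b (\<lambda>x. LINT t:{a..x}|lborel. phi t) n xs"
  shows "\<exists>ys. SCW a b H n ys"
proof (cases "n = 0")
  case True then show ?thesis using W by (intro exI[of _ xs]) (auto simp: SCW_def)
next
  case False
  define F where "F x = (LINT t:{a..x}|lborel. phi t)" for x
  define c where "c i = (if i = 0 then a else xs (i - 1))" for i
  have rng: "a < xs i \<and> xs i < b" if "i \<le> n" for i using W that by (auto simp: SCW_def)
  have prod: "F (xs i) * F (xs (Suc i)) < 0" "xs i < xs (Suc i)" if "i < n" for i
    using W that by (auto simp: SCW_def F_def)
  have c_le: "a \<le> c i \<and> c i < xs i" if "i \<le> n" for i
  proof (cases i)
    case 0 then show ?thesis using rng[OF that] by (simp add: c_def)
  next
    case (Suc j)
    then show ?thesis using rng[of j] prod(2)[of j] that by (auto simp: c_def)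
  qed
  have Fa: "F a = 0" unfolding F_def by (rule int_point0)
  have split: "F (xs i) = F (c i) + (LINT t:{c i<..xs i}|lborel. phi t)" if "i \<le> n" for i
    unfolding F_def using c_le[OF that] rng[OF that] by (intro int_split_left[OF int]) auto
  have key: "0 < F (xs i) * (F (xs i) - F (c i))" if "i \<le> n" for i
  proof (cases i)
    case 0
    have "F (xs 0) \<noteq> 0" using prod(1)[of 0] False by auto
    then have "0 < F (xs 0) * F (xs 0)" by (metis not_real_square_gt_zero)
    then show ?thesis using 0 Fa by (simp add: c_def)
  next
    case (Suc j)
    have "F (xs j) * F (xs i) < 0" using prod(1)[of j] Suc that by auto
    moreover have "0 \<le> F (xs i) * F (xs i)" by simp
    moreover have "F (xs i) * (F (xs i) - F (c i)) = F (xs i) * F (xs i) - F (xs j) * F (xs i)"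
      using Suc by (simp add: c_def algebra_simps)
    ultimately show ?thesis by linarith
  qed
  have ex: "\<exists>t. i \<le> n \<longrightarrow> t \<in> {c i<..<xs i} \<and> 0 < F (xs i) * H t" for i
  proof (cases "i \<le> n")
    case True
    have "\<exists>t\<in>{c i<..<xs i}. 0 < F (xs i) * H t"
    proof (rule point_exists)
      show "set_integrable lborel {c i<..xs i} phi"
        using c_le[OF True] rng[OF True] by (intro set_integrable_subset[OF int]) auto
      show "{c i<..xs i} \<subseteq> {c i..xs i}" by auto
      show "AE t in lborel. t \<in> {c i<..xs i} \<longrightarrow> sgn (phi t) = sgn (H t)"
        using sg by eventually_elim (use c_le[OF True] rng[OF True] in auto)
      show "0 < F (xs i) * (LINT t:{c i<..xs i}|lborel. phi t)"
        using key[OF True] split[OF True] by simp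
    qed
    then show ?thesis by blast
  qed auto
  then obtain ys where ys: "\<And>i. i \<le> n \<Longrightarrow> ys i \<in> {c i<..<xs i} \<and> 0 < F (xs i) * H (ys i)"
    by metis
  show ?thesis
  proof (intro exI[of _ ys], unfold SCW_def, intro conjI allI impI)
    fix i assume i: "i \<le> n"
    show "a < ys i" using ys[OF i] c_le[OF i] by auto
    show "ys i < b" using ys[OF i] rng[OF i] by auto
  next
    fix i assume i: "i < n"
    have "ys (Suc i) \<in> {c (Suc i)<..<xs (Suc i)}" using ys[of "Suc i"] i by auto
    then show "ys i < ys (Suc i)" using ys[of i] i by (auto simp: c_def)
    show "H (ys i) * H (ys (Suc i)) < 0"
      using sign_prod_lemma[OF prod(1)[OF i]] ys[of i] ys[of "Suc i"] i by auto
  qed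
qed

lemma bwd_SCW:
  fixes psi K :: "real \<Rightarrow> real"
  assumes int: "set_integrable lborel {a..b} psi"
    and sg: "AE t in lborel. t \<in> {a..b} \<longrightarrow> sgn (psi t) = sgn (K t)"
    and W: "SCW a b (\<lambda>x. LINT t:{x..b}|lborel. psi t) n xs"
  shows "\<exists>ys. SCW a b K n ys"
proof (cases "n = 0")
  case True then show ?thesis using W by (intro exI[of _ xs]) (auto simp: SCW_def)
next
  case False
  define G where "G x = (LINT t:{x..b}|lborel. psi t)" for x
  define d where "d i = (if i = n then b else xs (Suc i))" for i
  have rng: "a < xs i \<and> xs i < b" if "i \<le> n" for i using W that by (auto simp: SCW_def)
  have prod: "G (xs i) * G (xs (Suc i)) < 0" "xs i < xs (Suc i)" if "i < n" for i
    using W that by (auto simp: SCW_def G_def)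
  have d_le: "xs i < d i \<and> d i \<le> b" if "i \<le> n" for i
  proof (cases "i = n")
    case True then show ?thesis using rng[OF that] by (simp add: d_def)
  next
    case False
    then show ?thesis using rng[of "Suc i"] prod(2)[of i] that by (auto simp: d_def)
  qed
  have Gb: "G b = 0" unfolding G_def by (rule int_point0)
  have split: "G (xs i) = (LINT t:{xs i..<d i}|lborel. psi t) + G (d i)" if "i \<le> n" for i
    unfolding G_def using d_le[OF that] rng[OF that] by (intro int_split_right[OF int]) auto
  have key: "0 < G (xs i) * (G (xs i) - G (d i))" if "i \<le> n" for i
  proof (cases "i = n")
    case True
    obtain j where j: "n = Suc j" using \<open>n \<noteq> 0\<close> by (cases n) auto
    have "G (xs n) \<noteq> 0" using prod(1)[of j] j by auto
    then have "0 < G (xs n) * G (xs n)" by (metis not_real_square_gt_zero)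
    then show ?thesis using True Gb by (simp add: d_def)
  next
    case False
    have "G (xs i) * G (xs (Suc i)) < 0" using prod(1)[of i] False that by auto
    moreover have "0 \<le> G (xs i) * G (xs i)" by simp
    moreover have "G (xs i) * (G (xs i) - G (d i)) = G (xs i) * G (xs i) - G (xs i) * G (xs (Suc i))"
      using False by (simp add: d_def algebra_simps)
    ultimately show ?thesis by linarith
  qed
  have ex: "\<exists>t. i \<le> n \<longrightarrow> t \<in> {xs i<..<d i} \<and> 0 < G (xs i) * K t" for i
  proof (cases "i \<le> n")
    case True
    have "\<exists>t\<in>{xs i<..<d i}. 0 < G (xs i) * K t"
    proof (rule point_exists)
      show "set_integrable lborel {xs i..<d i} psi"
        using d_le[OF True] rng[OF True] by (intro set_integrable_subset[OF int]) auto
      show "{xs i..<d i} \<subseteq> {xs i..d i}" by auto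
      show "AE t in lborel. t \<in> {xs i..<d i} \<longrightarrow> sgn (psi t) = sgn (K t)"
        using sg by eventually_elim (use d_le[OF True] rng[OF True] in auto)
      show "0 < G (xs i) * (LINT t:{xs i..<d i}|lborel. psi t)"
        using key[OF True] split[OF True] by simp
    qed
    then show ?thesis by blast
  qed auto
  then obtain ys where ys: "\<And>i. i \<le> n \<Longrightarrow> ys i \<in> {xs i<..<d i} \<and> 0 < G (xs i) * K (ys i)"
    by metis
  show ?thesis
  proof (intro exI[of _ ys], unfold SCW_def, intro conjI allI impI)
    fix i assume i: "i \<le> n"
    show "a < ys i" using ys[OF i] rng[OF i] by auto
    show "ys i < b" using ys[OF i] d_le[OF i] by auto
  next
    fix i assume i: "i < n"
    have "ys i < d i" using ys[of i] i by auto
    then show "ys i < ys (Suc i)" using ys[of "Suc i"] i by (auto simp: d_def)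
    show "K (ys i) * K (ys (Suc i)) < 0"
      using sign_prod_lemma[OF prod(1)[OF i]] ys[of i] ys[of "Suc i"] i by auto
  qed
qed




lemma sbm_iff:
  fixes f :: "real \<Rightarrow> real"
  shows "set_borel_measurable lborel {a..b} f \<longleftrightarrow> f \<in> borel_measurable (restrict_space lborel {a..b})"
  unfolding set_borel_measurable_def
  by (rule borel_measurable_restrict_space_iff[symmetric]) simp

lemma cont_bm:
  fixes f :: "real \<Rightarrow> real"
  assumes "continuous_on {a..b} f"
  shows "f \<in> borel_measurable (restrict_space lborel {a..b})"
proof -
  have "f \<in> borel_measurable (restrict_space borel {a..b})"
    by (rule borel_measurable_continuous_on_restrict[OF assms])
  then show ?thesis
    by (subst measurable_cong_sets[OF sets_restrict_space_cong[OF sets_lborel] refl])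
qed

lemma spow_measurable [measurable]:
  fixes f :: "'a \<Rightarrow> real"
  assumes [measurable]: "f \<in> borel_measurable M"
  shows "(\<lambda>x. spow s (f x)) \<in> borel_measurable M"
  unfolding spow_def by measurable

lemma indef_cont_left:
  fixes phi :: "real \<Rightarrow> real"
  assumes int: "set_integrable lborel {a..b} phi"
  shows "continuous_on {a..b} (\<lambda>x. LINT t:{a..x}|lborel. phi t)"
proof -
  have hk: "phi integrable_on {a..b}" using set_borel_integral_eq_integral(1)[OF int] .
  have "continuous_on {a..b} (\<lambda>x. integral {a..x} phi)"
    by (rule indefinite_integral_continuous_1[OF hk])
  moreover have "(LINT t:{a..x}|lborel. phi t) = integral {a..x} phi" if "x \<in> {a..b}" for x
    by (rule set_borel_integral_eq_integral(2)) (rule set_integrable_subset[OF int], use that in auto)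
  ultimately show ?thesis using continuous_on_cong by (metis (no_types, lifting))
qed

lemma indef_cont_right:
  fixes phi :: "real \<Rightarrow> real"
  assumes int: "set_integrable lborel {a..b} phi"
  shows "continuous_on {a..b} (\<lambda>x. LINT t:{x..b}|lborel. phi t)"
proof -
  have hk: "phi integrable_on {a..b}" using set_borel_integral_eq_integral(1)[OF int] .
  have "continuous_on {a..b} (\<lambda>x. integral {x..b} phi)"
    by (rule indefinite_integral_continuous_1'[OF hk])
  moreover have "(LINT t:{x..b}|lborel. phi t) = integral {x..b} phi" if "x \<in> {a..b}" for x
    by (rule set_borel_integral_eq_integral(2)) (rule set_integrable_subset[OF int], use that in auto)
  ultimately show ?thesis using continuous_on_cong by (metis (no_types, lifting))
qed

lemma indef_bound_left:
  fixes phi :: "real \<Rightarrow> real"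
  assumes int: "set_integrable lborel {a..b} phi" and x: "x \<in> {a..b}"
  shows "\<bar>LINT t:{a..x}|lborel. phi t\<bar> \<le> (LINT t:{a..b}|lborel. \<bar>phi t\<bar>)"
proof -
  have i1: "set_integrable lborel {a..x} phi" by (rule set_integrable_subset[OF int]) (use x in auto)
  have "\<bar>LINT t:{a..x}|lborel. phi t\<bar> \<le> (LINT t:{a..x}|lborel. norm (phi t))"
    using set_integral_norm_bound[OF i1] by simp
  also have "\<dots> \<le> (LINT t:{a..b}|lborel. \<bar>phi t\<bar>)"
    unfolding set_lebesgue_integral_def
  proof (rule integral_mono)
    show "integrable lborel (\<lambda>t. indicat_real {a..x} t *\<^sub>R norm (phi t))"
      using set_integrable_abs[OF i1] by (simp add: set_integrable_def)
    show "integrable lborel (\<lambda>t. indicat_real {a..b} t *\<^sub>R \<bar>phi t\<bar>)"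
      using set_integrable_abs[OF int] by (simp add: set_integrable_def)
    show "indicat_real {a..x} t *\<^sub>R norm (phi t) \<le> indicat_real {a..b} t *\<^sub>R \<bar>phi t\<bar>" for t
      using x by (auto simp: indicator_def)
  qed
  finally show ?thesis .
qed




lemma fubini_tri:
  fixes phi psi :: "real \<Rightarrow> real"
  assumes phi: "integrable lborel phi" and psi: "integrable lborel psi"
  shows "(LINT x|lborel. phi x * (LINT y|lborel. of_bool (x \<le> y) * psi y))
       = (LINT y|lborel. psi y * (LINT x|lborel. of_bool (x \<le> y) * phi x))"
proof -
  have [measurable]: "phi \<in> borel_measurable lborel" "psi \<in> borel_measurable lborel"
    using phi psi by auto
  define k where "k x y = (if x \<le> y then phi x * psi y else 0)" for x y :: real
  have km[measurable]: "case_prod k \<in> borel_measurable (lborel \<Otimes>\<^sub>M lborel)"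
    unfolding k_def by measurable
  have psiI: "integrable lborel (\<lambda>y. \<bar>psi y\<bar>)" using psi by auto
  have kint: "integrable (lborel \<Otimes>\<^sub>M lborel) (case_prod k)"
  proof (rule lborel_pair.Fubini_integrable)
    show "case_prod k \<in> borel_measurable (lborel \<Otimes>\<^sub>M lborel)" by (rule km)
    show "integrable lborel (\<lambda>x. LINT y|lborel. norm (case_prod k (x, y)))"
    proof (rule Bochner_Integration.integrable_bound)
      show "integrable lborel (\<lambda>x. \<bar>phi x\<bar> * (LINT y|lborel. \<bar>psi y\<bar>))"
        using phi by auto
      show "(\<lambda>x. LINT y|lborel. norm (case_prod k (x, y))) \<in> borel_measurable lborel"
        by measurable
      show "AE x in lborel. norm (LINT y|lborel. norm (case_prod k (x, y)))
              \<le> norm (\<bar>phi x\<bar> * (LINT y|lborel. \<bar>psi y\<bar>))"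
      proof (rule AE_I2)
        fix x
        have "0 \<le> (LINT y|lborel. norm (case_prod k (x, y)))" by (rule integral_nonneg_AE) auto
        moreover have "(LINT y|lborel. norm (case_prod k (x, y))) \<le> (LINT y|lborel. \<bar>phi x\<bar> * \<bar>psi y\<bar>)"
        proof (rule integral_mono)
          show "integrable lborel (\<lambda>y. \<bar>phi x\<bar> * \<bar>psi y\<bar>)" using psiI by auto
          show "integrable lborel (\<lambda>y. norm (case_prod k (x, y)))"
            by (rule Bochner_Integration.integrable_bound[of _ "\<lambda>y. \<bar>phi x\<bar> * \<bar>psi y\<bar>"])
               (use psiI in \<open>auto simp: k_def abs_mult\<close>)
          show "norm (case_prod k (x, y)) \<le> \<bar>phi x\<bar> * \<bar>psi y\<bar>" for y
            by (auto simp: k_def abs_mult)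
        qed
        moreover have "0 \<le> (LINT y|lborel. \<bar>psi y\<bar>)" by (rule integral_nonneg_AE) auto
        ultimately show "norm (LINT y|lborel. norm (case_prod k (x, y)))
              \<le> norm (\<bar>phi x\<bar> * (LINT y|lborel. \<bar>psi y\<bar>))"
          by (simp add: abs_mult)
      qed
    qed
    show "AE x in lborel. integrable lborel (\<lambda>y. case_prod k (x, y))"
    proof (rule AE_I2)
      fix x
      show "integrable lborel (\<lambda>y. case_prod k (x, y))"
        by (rule Bochner_Integration.integrable_bound[of _ "\<lambda>y. \<bar>phi x\<bar> * \<bar>psi y\<bar>"])
           (use psiI in \<open>auto simp: k_def abs_mult\<close>)
    qed
  qed
  have "(LINT y|lborel. LINT x|lborel. k x y) = (LINT x|lborel. LINT y|lborel. k x y)"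
    by (rule lborel_pair.Fubini_integral) (use kint in simp)
  moreover have "(LINT y|lborel. k x y) = phi x * (LINT y|lborel. of_bool (x \<le> y) * psi y)" for x
  proof -
    have "(LINT y|lborel. k x y) = (LINT y|lborel. phi x * (of_bool (x \<le> y) * psi y))"
      by (rule Bochner_Integration.integral_cong) (auto simp: k_def)
    then show ?thesis by simp
  qed
  moreover have "(LINT x|lborel. k x y) = psi y * (LINT x|lborel. of_bool (x \<le> y) * phi x)" for y
  proof -
    have "(LINT x|lborel. k x y) = (LINT x|lborel. psi y * (of_bool (x \<le> y) * phi x))"
      by (rule Bochner_Integration.integral_cong) (auto simp: k_def)
    then show ?thesis by simp
  qed
  ultimately show ?thesis by simp
qed




definition Fp :: "real \<Rightarrow> (real \<Rightarrow> real) \<Rightarrow> (real \<Rightarrow> real) \<Rightarrow> real \<Rightarrow> real" where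
  "Fp a u f x = (LINT t:{a..x}|lborel. f t * u t)"

definition psiF :: "real \<Rightarrow> (real \<Rightarrow> real) \<Rightarrow> (real \<Rightarrow> real) \<Rightarrow> real \<Rightarrow> (real \<Rightarrow> real) \<Rightarrow> real \<Rightarrow> real" where
  "psiF a u v q f y = v y * spow q (v y * Fp a u f y)"

definition Gp :: "real \<Rightarrow> real \<Rightarrow> (real \<Rightarrow> real) \<Rightarrow> (real \<Rightarrow> real) \<Rightarrow> real \<Rightarrow> (real \<Rightarrow> real) \<Rightarrow> real \<Rightarrow> real" where
  "Gp a b u v q f x = (LINT y:{x..b}|lborel. psiF a u v q f y)"

lemma Hop_Fp: "Hop a u v f x = v x * Fp a u f x"
  by (simp add: Hop_def Fp_def)

lemma pw_bound:
  fixes V F C q :: real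
  assumes "0 < V" "\<bar>F\<bar> \<le> C" "1 < q"
  shows "\<bar>V * spow q (V * F)\<bar> \<le> C powr (q - 1) * \<bar>V\<bar> powr q"
proof -
  have "\<bar>V * spow q (V * F)\<bar> = V * (V powr (q - 1) * \<bar>F\<bar> powr (q - 1))"
    using assms by (simp add: abs_spow abs_mult powr_mult)
  also have "\<dots> = (V * V powr (q - 1)) * \<bar>F\<bar> powr (q - 1)" by simp
  also have "V * V powr (q - 1) = V powr q"
    using assms(1) by (simp add: powr_diff)
  also have "V powr q * \<bar>F\<bar> powr (q - 1) \<le> V powr q * C powr (q - 1)"
    using assms by (intro mult_left_mono powr_mono2) auto
  finally show ?thesis using assms(1) by (simp add: mult.commute)
qed

lemma sgn_step1:
  fixes U F1 F2 G1 G2 L1 L2 eps p :: real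
  assumes "0 < U" "0 < eps" "1 < p"
    and "spow p F1 = L1 * (U * G1)" "spow p F2 = L2 * (U * G2)"
  shows "sgn (F1 * U - eps * (F2 * U)) = sgn (L1 * G1 - eps powr (p - 1) * L2 * G2)"
proof -
  have "F1 * U - eps * (F2 * U) = U * (F1 - eps * F2)" by (simp add: algebra_simps)
  then have "sgn (F1 * U - eps * (F2 * U)) = sgn (F1 - eps * F2)"
    using assms(1) by (simp only: sgn_mult) simp
  also have "\<dots> = sgn (spow p F1 - spow p (eps * F2))"
    by (rule spow_sgn_diff[OF assms(3), symmetric])
  also have "spow p F1 - spow p (eps * F2) = U * (L1 * G1 - eps powr (p - 1) * L2 * G2)"
    using assms spow_scale[OF assms(2), of p F2] by (simp add: algebra_simps)
  also have "sgn \<dots> = sgn (L1 * G1 - eps powr (p - 1) * L2 * G2)"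
    using assms(1) by (simp add: sgn_mult)
  finally show ?thesis .
qed

lemma sgn_step2:
  fixes V A B L1 c q d :: real
  assumes "0 < V" "0 < L1" "0 < c" "1 < q" "d = (c / L1) powr (1 / (q - 1))"
  shows "sgn (L1 * (V * spow q (V * A)) - c * (V * spow q (V * B))) = sgn (V * A - d * (V * B))"
proof -
  have dq: "d powr (q - 1) = c / L1"
    using assms by (simp add: powr_powr)
  have d0: "0 < d" using assms by simp
  have "L1 * (V * spow q (V * A)) - c * (V * spow q (V * B))
      = (L1 * V) * (spow q (V * A) - (c / L1) * spow q (V * B))"
    using assms(2) by (simp add: field_simps)
  also have "(c / L1) * spow q (V * B) = spow q (d * (V * B))"
    using spow_scale[OF d0, of q "V * B"] dq by simp
  finally have e: "L1 * (V * spow q (V * A)) - c * (V * spow q (V * B))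
      = (L1 * V) * (spow q (V * A) - spow q (d * (V * B)))" .
  have "sgn (L1 * (V * spow q (V * A)) - c * (V * spow q (V * B)))
      = sgn (spow q (V * A) - spow q (d * (V * B)))"
    unfolding e using assms(1,2) by (simp add: sgn_mult)
  also have "\<dots> = sgn (V * A - d * (V * B))" by (rule spow_sgn_diff[OF assms(4)])
  finally show ?thesis .
qed

context
  fixes a b p q :: real and u v :: "real \<Rightarrow> real"
  assumes ab: "a < b" and p: "1 < p" and q: "1 < q"
    and u_pos: "\<forall>x\<in>{a..b}. 0 < u x" and v_pos: "\<forall>x\<in>{a..b}. 0 < v x"
    and u_L: "in_Lp (p / (p - 1)) a b u" and v_L: "in_Lp q a b v"
begin

lemma u_bm [measurable]: "u \<in> borel_measurable (restrict_space lborel {a..b})"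
  using u_L by (simp add: in_Lp_def sbm_iff)

lemma v_bm [measurable]: "v \<in> borel_measurable (restrict_space lborel {a..b})"
  using v_L by (simp add: in_Lp_def sbm_iff)

lemma phi_int:
  assumes fL: "in_Lp p a b f"
  shows "set_integrable lborel {a..b} (\<lambda>t. f t * u t)"
proof (rule set_integrable_bound)
  have [measurable]: "f \<in> borel_measurable (restrict_space lborel {a..b})"
    using fL by (simp add: in_Lp_def sbm_iff)
  show "set_integrable lborel {a..b} (\<lambda>t. \<bar>f t\<bar> powr p + \<bar>u t\<bar> powr (p / (p - 1)))"
    using fL u_L by (intro set_integral_add(1)) (auto simp: in_Lp_def)
  show "set_borel_measurable lborel {a..b} (\<lambda>t. f t * u t)"
    unfolding sbm_iff by measurable
  show "AE x in lborel. x \<in> {a..b} \<longrightarrow> norm (f x * u x) \<le> norm (\<bar>f x\<bar> powr p + \<bar>u x\<bar> powr (p / (p - 1)))"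
    using young_simple[OF p] by auto
qed

lemma F_cont: "in_Lp p a b f \<Longrightarrow> continuous_on {a..b} (Fp a u f)"
  unfolding Fp_def[abs_def] by (rule indef_cont_left[OF phi_int])

lemma F_bound: "in_Lp p a b f \<Longrightarrow> x \<in> {a..b} \<Longrightarrow> \<bar>Fp a u f x\<bar> \<le> (LINT t:{a..b}|lborel. \<bar>f t * u t\<bar>)"
  unfolding Fp_def by (rule indef_bound_left[OF phi_int])

lemma psi_int:
  assumes fL: "in_Lp p a b f"
  shows "set_integrable lborel {a..b} (psiF a u v q f)"
proof (rule set_integrable_bound)
  define C where "C = (LINT t:{a..b}|lborel. \<bar>f t * u t\<bar>)"
  have [measurable]: "Fp a u f \<in> borel_measurable (restrict_space lborel {a..b})"
    by (rule cont_bm[OF F_cont[OF fL]])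
  show "set_integrable lborel {a..b} (\<lambda>t. C powr (q - 1) * \<bar>v t\<bar> powr q)"
    using v_L by (intro set_integrable_mult_right) (auto simp: in_Lp_def)
  show "set_borel_measurable lborel {a..b} (psiF a u v q f)"
    unfolding sbm_iff psiF_def[abs_def] by measurable
  show "AE x in lborel. x \<in> {a..b} \<longrightarrow> norm (psiF a u v q f x) \<le> norm (C powr (q - 1) * \<bar>v x\<bar> powr q)"
  proof (rule AE_I2, intro impI)
    fix x assume x: "x \<in> {a..b}"
    have "\<bar>psiF a u v q f x\<bar> \<le> C powr (q - 1) * \<bar>v x\<bar> powr q"
      unfolding psiF_def using v_pos x F_bound[OF fL x] q by (intro pw_bound) (auto simp: C_def)
    then show "norm (psiF a u v q f x) \<le> norm (C powr (q - 1) * \<bar>v x\<bar> powr q)" by simp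
  qed
qed

lemma G_cont: "in_Lp p a b f \<Longrightarrow> continuous_on {a..b} (Gp a b u v q f)"
  unfolding Gp_def[abs_def] by (rule indef_cont_right[OF psi_int])

lemma rel:
  assumes st: "spectral_triple a b u v p q g f lam"
  shows "AE x in lborel. x \<in> {a..b} \<longrightarrow> spow p (f x) = lam * (u x * Gp a b u v q f x)"
proof -
  have ae: "AE x in lborel. x \<in> {a..b} \<longrightarrow> spow p (f x) = lam * Hadj b u v (\<lambda>y. spow q (g y)) x"
    and gH: "\<forall>x\<in>{a..b}. g x = Hop a u v f x"
    using st by (auto simp: spectral_triple_def)
  show ?thesis using ae
  proof eventually_elim
    case (elim x)
    show ?case
    proof
      assume x: "x \<in> {a..b}"
      have "(LINT y:{x..b}|lborel. v y * spow q (g y)) = (LINT y:{x..b}|lborel. psiF a u v q f y)"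
        by (rule set_lebesgue_integral_cong) (use x gH in \<open>auto simp: psiF_def Hop_Fp\<close>)
      then show "spow p (f x) = lam * (u x * Gp a b u v q f x)"
        using elim x by (simp add: Hadj_def Gp_def)
    qed
  qed
qed

lemma lam_pos:
  assumes st: "spectral_triple a b u v p q g f lam"
  shows "0 < lam"
proof -
  have fL: "in_Lp p a b f" and nrm: "Lp_norm p a b f = 1"
    using st by (auto simp: spectral_triple_def)
  have [measurable]: "f \<in> borel_measurable (restrict_space lborel {a..b})"
    using fL by (simp add: in_Lp_def sbm_iff)
  have [measurable]: "Fp a u f \<in> borel_measurable (restrict_space lborel {a..b})"
    by (rule cont_bm[OF F_cont[OF fL]])
  have [measurable]: "Gp a b u v q f \<in> borel_measurable (restrict_space lborel {a..b})"
    by (rule cont_bm[OF G_cont[OF fL]])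
  define I where "I = (LINT x:{a..b}|lborel. \<bar>f x\<bar> powr p)"
  have I0: "0 \<le> I" unfolding I_def set_lebesgue_integral_def
    by (rule integral_nonneg_AE) (auto simp: indicator_def)
  have "I powr (1 / p) = 1" using nrm by (simp add: Lp_norm_def I_def)
  then have I1: "I = 1"
  proof -
    assume h: "I powr (1 / p) = 1"
    then have "I \<noteq> 0" by auto
    then have "I = (I powr (1 / p)) powr p" using I0 p by (simp add: powr_powr)
    then show ?thesis using h by simp
  qed
  define phi0 where "phi0 x = indicator {a..b} x * (f x * u x)" for x
  define psi0 where "psi0 y = indicator {a..b} y * psiF a u v q f y" for y
  have phi0I: "integrable lborel phi0"
    using phi_int[OF fL] unfolding set_integrable_def phi0_def by simp
  have psi0I: "integrable lborel psi0"
    using psi_int[OF fL] unfolding set_integrable_def psi0_def by simp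
  note fub = fubini_tri[OF phi0I psi0I]
  have L: "(LINT x|lborel. phi0 x * (LINT y|lborel. of_bool (x \<le> y) * psi0 y))
      = (LINT x|lborel. indicator {a..b} x * (f x * u x * Gp a b u v q f x))"
  proof (rule Bochner_Integration.integral_cong[OF refl])
    fix x
    show "phi0 x * (LINT y|lborel. of_bool (x \<le> y) * psi0 y) = indicator {a..b} x * (f x * u x * Gp a b u v q f x)"
    proof (cases "x \<in> {a..b}")
      case True
      have "(LINT y|lborel. of_bool (x \<le> y) * psi0 y) = Gp a b u v q f x"
        unfolding Gp_def set_lebesgue_integral_def psi0_def
        by (rule Bochner_Integration.integral_cong) (use True in \<open>auto simp: indicator_def\<close>)
      then show ?thesis using True by (simp add: phi0_def)
    qed (simp add: phi0_def)
  qed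
  have R: "(LINT y|lborel. psi0 y * (LINT x|lborel. of_bool (x \<le> y) * phi0 x))
      = (LINT y|lborel. indicator {a..b} y * \<bar>v y * Fp a u f y\<bar> powr q)"
  proof (rule Bochner_Integration.integral_cong[OF refl])
    fix y
    show "psi0 y * (LINT x|lborel. of_bool (x \<le> y) * phi0 x) = indicator {a..b} y * \<bar>v y * Fp a u f y\<bar> powr q"
    proof (cases "y \<in> {a..b}")
      case True
      have "(LINT x|lborel. of_bool (x \<le> y) * phi0 x) = Fp a u f y"
        unfolding Fp_def set_lebesgue_integral_def phi0_def
        by (rule Bochner_Integration.integral_cong) (use True in \<open>auto simp: indicator_def\<close>)
      moreover have "psiF a u v q f y * Fp a u f y = \<bar>v y * Fp a u f y\<bar> powr q"
        using spow_mult_self[OF q, of "v y * Fp a u f y"] by (simp add: psiF_def algebra_simps)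
      ultimately show ?thesis using True by (simp add: psi0_def)
    qed (simp add: psi0_def)
  qed
  have Rnn: "0 \<le> (LINT y|lborel. indicator {a..b} y * \<bar>v y * Fp a u f y\<bar> powr q)"
    by (rule integral_nonneg_AE) (auto simp: indicator_def)
  have "I = (LINT x|lborel. indicator {a..b} x * (lam * (f x * u x * Gp a b u v q f x)))"
    unfolding I_def set_lebesgue_integral_def
  proof (rule integral_cong_AE)
    show "(\<lambda>x. indicat_real {a..b} x *\<^sub>R \<bar>f x\<bar> powr p) \<in> borel_measurable lborel"
    proof -
      have "set_borel_measurable lborel {a..b} (\<lambda>x. \<bar>f x\<bar> powr p)" unfolding sbm_iff by measurable
      then show ?thesis unfolding set_borel_measurable_def by simp
    qed
    show "(\<lambda>x. indicator {a..b} x * (lam * (f x * u x * Gp a b u v q f x))) \<in> borel_measurable lborel"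
    proof -
      have "set_borel_measurable lborel {a..b} (\<lambda>x. lam * (f x * u x * Gp a b u v q f x))" unfolding sbm_iff by measurable
      then show ?thesis unfolding set_borel_measurable_def by simp
    qed
    show "AE x in lborel. indicat_real {a..b} x *\<^sub>R \<bar>f x\<bar> powr p = indicator {a..b} x * (lam * (f x * u x * Gp a b u v q f x))"
      using rel[OF st]
    proof eventually_elim
      case (elim x)
      show ?case
      proof (cases "x \<in> {a..b}")
        case True
        have "\<bar>f x\<bar> powr p = f x * spow p (f x)" using spow_mult_self[OF p] by simp
        also have "\<dots> = lam * (f x * u x * Gp a b u v q f x)" using elim True by simp
        finally show ?thesis using True by simp
      qed simp
    qed
  qed
  also have "\<dots> = lam * (LINT x|lborel. indicator {a..b} x * (f x * u x * Gp a b u v q f x))"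
    by (simp add: algebra_simps)
  also have "\<dots> = lam * (LINT y|lborel. indicator {a..b} y * \<bar>v y * Fp a u f y\<bar> powr q)"
    using fub L R by simp
  finally have "1 = lam * (LINT y|lborel. indicator {a..b} y * \<bar>v y * Fp a u f y\<bar> powr q)"
    using I1 by simp
  then show ?thesis using Rnn
    by (metis less_numeral_extra(1) mult_nonpos_nonneg not_le)
qed

lemma Fp_diff:
  assumes "in_Lp p a b f1" "in_Lp p a b f2" "x \<in> {a..b}"
  shows "Fp a u f1 x - e * Fp a u f2 x = (LINT t:{a..x}|lborel. f1 t * u t - e * (f2 t * u t))"
proof -
  have i1: "set_integrable lborel {a..x} (\<lambda>t. f1 t * u t)"
    by (rule set_integrable_subset[OF phi_int[OF assms(1)]]) (use assms(3) in auto)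
  have i2: "set_integrable lborel {a..x} (\<lambda>t. f2 t * u t)"
    by (rule set_integrable_subset[OF phi_int[OF assms(2)]]) (use assms(3) in auto)
  show ?thesis unfolding Fp_def
    by (subst set_integral_diff(2)[OF i1 set_integrable_mult_right[OF i2]]) simp
qed

lemma Gp_diff:
  assumes "in_Lp p a b f1" "in_Lp p a b f2" "x \<in> {a..b}"
  shows "l * Gp a b u v q f1 x - e * Gp a b u v q f2 x
    = (LINT t:{x..b}|lborel. l * psiF a u v q f1 t - e * psiF a u v q f2 t)"
proof -
  have i1: "set_integrable lborel {x..b} (psiF a u v q f1)"
    by (rule set_integrable_subset[OF psi_int[OF assms(1)]]) (use assms(3) in auto)
  have i2: "set_integrable lborel {x..b} (psiF a u v q f2)"
    by (rule set_integrable_subset[OF psi_int[OF assms(2)]]) (use assms(3) in auto)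
  show ?thesis unfolding Gp_def
    by (subst set_integral_diff(2)[OF set_integrable_mult_right[OF i1] set_integrable_mult_right[OF i2]]) simp
qed

lemma main_ctx:
  assumes st1: "spectral_triple a b u v p q g1 f1 lam1"
    and st2: "spectral_triple a b u v p q g2 f2 lam2"
    and eps: "0 < eps"
  shows "sign_changes a b (\<lambda>x. Hop a u v f1 x - eps * Hop a u v f2 x)
       \<le> sign_changes a b (\<lambda>x. Hop a u v f1 x
            - eps powr ((p - 1) / (q - 1)) * (lam2 / lam1) powr (1 / (q - 1)) * Hop a u v f2 x)"
proof (rule sign_changes_le)
  fix n xs
  assume W: "SCW a b (\<lambda>x. Hop a u v f1 x - eps * Hop a u v f2 x) n xs"
  have l1: "0 < lam1" by (rule lam_pos[OF st1])
  have l2: "0 < lam2" by (rule lam_pos[OF st2])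
  have f1L: "in_Lp p a b f1" using st1 by (simp add: spectral_triple_def)
  have f2L: "in_Lp p a b f2" using st2 by (simp add: spectral_triple_def)
  define c where "c = eps powr (p - 1) * lam2"
  have c0: "0 < c" using eps l2 by (simp add: c_def)
  define d where "d = eps powr ((p - 1) / (q - 1)) * (lam2 / lam1) powr (1 / (q - 1))"
  have d_eq: "d = (c / lam1) powr (1 / (q - 1))"
  proof -
    have "(c / lam1) powr (1 / (q - 1)) = (eps powr (p - 1)) powr (1 / (q - 1)) * (lam2 / lam1) powr (1 / (q - 1))"
      unfolding c_def using eps l1 l2 by (simp add: powr_mult[symmetric] mult.assoc)
    also have "(eps powr (p - 1)) powr (1 / (q - 1)) = eps powr ((p - 1) / (q - 1))"
      by (simp add: powr_powr)
    finally show ?thesis by (simp add: d_def)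
  qed
  define phi where "phi t = f1 t * u t - eps * (f2 t * u t)" for t
  define H where "H x = lam1 * Gp a b u v q f1 x - c * Gp a b u v q f2 x" for x
  define psi where "psi t = lam1 * psiF a u v q f1 t - c * psiF a u v q f2 t" for t
  have W0: "SCW a b (\<lambda>x. LINT t:{a..x}|lborel. phi t) n xs"
  proof (rule SCW_transfer[OF _ W])
    fix x assume x: "a < x" "x < b"
    have "Hop a u v f1 x - eps * Hop a u v f2 x = v x * (LINT t:{a..x}|lborel. phi t)"
      unfolding Hop_Fp phi_def using Fp_diff[OF f1L f2L, of x eps] x
      by (simp add: algebra_simps)
    then show "sgn (Hop a u v f1 x - eps * Hop a u v f2 x) = sgn (LINT t:{a..x}|lborel. phi t)"
      using v_pos x by (simp add: sgn_mult)
  qed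
  have phiI: "set_integrable lborel {a..b} phi"
    unfolding phi_def using phi_int[OF f1L] phi_int[OF f2L] by auto
  have sg1: "AE t in lborel. t \<in> {a..b} \<longrightarrow> sgn (phi t) = sgn (H t)"
    using rel[OF st1] rel[OF st2]
  proof eventually_elim
    case (elim t)
    show ?case
    proof
      assume t: "t \<in> {a..b}"
      show "sgn (phi t) = sgn (H t)"
        unfolding phi_def H_def c_def
        using sgn_step1[OF _ eps p, of "u t"] elim t u_pos by (simp add: mult.assoc)
    qed
  qed
  obtain ys where W1: "SCW a b H n ys" using fwd_SCW[OF phiI sg1 W0] by blast
  have W1': "SCW a b (\<lambda>x. LINT t:{x..b}|lborel. psi t) n ys"
  proof (rule SCW_transfer[OF _ W1])
    fix x assume x: "a < x" "x < b"
    show "sgn (H x) = sgn (LINT t:{x..b}|lborel. psi t)"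
      unfolding H_def psi_def using Gp_diff[OF f1L f2L, of x lam1 c] x by simp
  qed
  have psiI: "set_integrable lborel {a..b} psi"
    unfolding psi_def using psi_int[OF f1L] psi_int[OF f2L] by auto
  have sg2: "AE t in lborel. t \<in> {a..b} \<longrightarrow> sgn (psi t) = sgn (Hop a u v f1 t - d * Hop a u v f2 t)"
  proof (rule AE_I2, intro impI)
    fix t assume t: "t \<in> {a..b}"
    show "sgn (psi t) = sgn (Hop a u v f1 t - d * Hop a u v f2 t)"
      unfolding psi_def psiF_def Hop_Fp
      by (rule sgn_step2[OF _ l1 c0 q d_eq]) (use v_pos t in auto)
  qed
  obtain zs where "SCW a b (\<lambda>x. Hop a u v f1 x - d * Hop a u v f2 x) n zs"
    using bwd_SCW[OF psiI sg2 W1'] by blast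
  then show "\<exists>zs. SCW a b (\<lambda>x. Hop a u v f1 x
            - eps powr ((p - 1) / (q - 1)) * (lam2 / lam1) powr (1 / (q - 1)) * Hop a u v f2 x) n zs"
    unfolding d_def by blast
qed

end


theorem mainTheorem2:
  fixes a b p q :: real and u v :: "real \<Rightarrow> real"
    and g1 f1 g2 f2 :: "real \<Rightarrow> real" and lam1 lam2 eps :: real
  assumes ab: "a < b"
    and p: "1 < p" and q: "1 < q"
    and u_pos: "\<forall>x\<in>{a..b}. 0 < u x" and v_pos: "\<forall>x\<in>{a..b}. 0 < v x"
    and u_L: "in_Lp (p / (p - 1)) a b u" and v_L: "in_Lp q a b v"
    and st1: "spectral_triple a b u v p q g1 f1 lam1"
    and st2: "spectral_triple a b u v p q g2 f2 lam2"
    and eps: "0 < eps"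
  shows "sign_changes a b (\<lambda>x. Hop a u v f1 x - eps * Hop a u v f2 x)
       \<le> sign_changes a b (\<lambda>x. Hop a u v f1 x
            - eps powr ((p - 1) / (q - 1)) * (lam2 / lam1) powr (1 / (q - 1)) * Hop a u v f2 x)"
    by (rule main_ctx[OF ab p q u_pos v_pos u_L v_L st1 st2 eps])

end
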